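(* Let $\mathbf{B}$ be a unital ring and $F\colon\mathfrak{XMod}\to\mathfrak{Mod}$ a module functor. Then $F$ is polynomial of degree at most $n$ if and only if the additive functor $\Phi(F)\colon\mathfrak{Laby}\to\mathfrak{Mod}$ vanishes on all finite sets with more than $n$ elements; equivalently, if and only if $\Phi(F)$ vanishes on all mazes with more than $n$ passages.
   Context: $\mathfrak{XMod}$: finitely generated free right $\mathbf{B}$-modules with right-module homomorphisms; $\mathfrak{Mod}$: all $\mathbf{B}$-modules; a module functor is any (not necessarily additive) functor $\mathfrak{XMod}\to\mathfrak{Mod}$. For homomorphisms $\alpha_1,\dots,\alpha_k$ with common source and target, $F(\alpha_1\diamond\cdots\diamond\alpha_k)=\sum_{I\subseteq\{1,\dots,k\}}(-1)^{k-|I|}F(\sum_{i\in I}\alpha_i)$. $F$ is polynomial of degree at most $n$ if $F(\alpha_1\diamond\cdots\diamond\alpha_{n+1})=0$ for all homomorphisms $\alpha_1,\dots,\alpha_{n+1}\colon M\to N$ and all $M,N$. For a finite set $X$, $\mathbf{B}^X$ has basis $(e_x)$; $b\sigma_{yx}\colon\mathbf{B}^X\to\mathbf{B}^Y$ is the map $e_x\mapsto e_yb$, $e_{x'}\mapsto 0$ ($x'\ne x$); $\pi_x=\sigma_{xx}$; $\mathrm{cr}_XF(\mathbf{B})=\operatorname{Im}F(\diamond_{x\in X}\pi_x)$. A passage $p\colon x\to y$ between elements of finite sets carries a label $\overline p\in\mathbf{B}$. A maze $P\colon X\to Y$ is a finite multi-set of passages from elements of $X$ to elements of $Y$ such that each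 element of $X$ is a source and each element of $Y$ a target of some passage. $\mathfrak{Laby}$ is the category whose objects are formal finite direct sums of finite sets and whose hom-group $\mathfrak{Laby}(X,Y)$ is generated by mazes $X\to Y$ modulo the relations $P\cup\{x\xrightarrow{0}y\}=0$ and $P\cup\{x\xrightarrow{a+b}y\}=P\cup\{x\xrightarrow{a}y\}+P\cup\{x\xrightarrow{b}y\}+P\cup\{x\xrightarrow{a}y,x\xrightarrow{b}y\}$ (for multi-sets of passages $P$), with composition $P\circ Q=\sum_{U\sqsubseteq P\boxtimes Q}U$, where $U$ ranges over sub-multi-sets of the multi-set of composable pairs $(p,q)$ ($q\colon x\to y\in Q$, $p\colon y\to z\in P$) using every passage occurrence of $P$ and of $Q$, and $U$ is read as the maze with passages $x\xrightarrow{\overline p\,\overline q}z$. $\Phi(F)\colon\mathfrak{Laby}\to\mathfrak{Mod}$ is the additive functor with $\Phi(F)(X)=\mathrm{cr}_XF(\mathbf{B})$ and $\Phi(F)(P)$ the restriction of $F(\diamond_{p\in P}\overline p\sigma_{y_px_p})$ (product over passage occurrences $p\colon x_p\to y_p$) to $\mathrm{cr}_XF(\mathbf{B})\to\mathrm{cr}_YF(\mathbf{B})$. *)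

theory Defs
  imports Main "HOL-Library.Multiset"
begin

text \<open>
  Model of XMod: the finitely generated free right B-module B^X, for X a finite
  set of natural numbers (every f.g. free module is isomorphic to one of these,
  so this full subcategory is equivalent to XMod).  A homomorphism
  B^X -> B^Y is a Y x X matrix A (entry A y x), acting on column vectors; it
  sends e_x to the sum of e_y (A y x).
\<close>

type_synonym 'b mat = "nat \<Rightarrow> nat \<Rightarrow> 'b"

definition hom :: "nat set \<Rightarrow> nat set \<Rightarrow> ('b::zero) mat set" where
  "hom X Y = {A. \<forall>y x. A y x \<noteq> 0 \<longrightarrow> y \<in> Y \<and> x \<in> X}"

definition idm :: "nat set \<Rightarrow> ('b::{zero,one}) mat" where
  "idm X = (\<lambda>y x. if x \<in> X \<and> y = x then 1 else 0)"

definition mcomp :: "nat set \<Rightarrow> ('b::semiring_0) mat \<Rightarrow> 'b mat \<Rightarrow> 'b mat" where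
  "mcomp Y A C = (\<lambda>z x. \<Sum>y\<in>Y. A z y * C y x)"

definition msum :: "'k set \<Rightarrow> ('k \<Rightarrow> ('b::comm_monoid_add) mat) \<Rightarrow> 'b mat" where
  "msum I \<alpha> = (\<lambda>y x. \<Sum>i\<in>I. \<alpha> i y x)"

definition sigma :: "'b \<Rightarrow> nat \<Rightarrow> nat \<Rightarrow> ('b::zero) mat" where
  "sigma b y x = (\<lambda>y' x'. if y' = y \<and> x' = x then b else 0)"

definition is_rmodule :: "('v::ab_group_add) set \<Rightarrow> ('v \<Rightarrow> 'b::ring_1 \<Rightarrow> 'v) \<Rightarrow> bool" where
  "is_rmodule M act \<longleftrightarrow>
     0 \<in> M \<and> (\<forall>v\<in>M. \<forall>w\<in>M. v + w \<in> M) \<and> (\<forall>v\<in>M. - v \<in> M) \<and>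
     (\<forall>v\<in>M. \<forall>b. act v b \<in> M) \<and>
     (\<forall>v\<in>M. \<forall>w\<in>M. \<forall>b. act (v + w) b = act v b + act w b) \<and>
     (\<forall>v\<in>M. \<forall>a b. act v (a + b) = act v a + act v b) \<and>
     (\<forall>v\<in>M. \<forall>a b. act v (a * b) = act (act v a) b) \<and>
     (\<forall>v\<in>M. act v 1 = v)"

text \<open>A (not necessarily additive) functor F : XMod -> Mod.  Fo X is the module F(B^X)
  (with action act X), Fm X Y A is F applied to A : B^X -> B^Y.\<close>
definition module_functor ::
  "(nat set \<Rightarrow> ('v::ab_group_add) set) \<Rightarrow> (nat set \<Rightarrow> 'v \<Rightarrow> 'b::ring_1 \<Rightarrow> 'v)
     \<Rightarrow> (nat set \<Rightarrow> nat set \<Rightarrow> 'b mat \<Rightarrow> 'v \<Rightarrow> 'v) \<Rightarrow> bool" where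
  "module_functor Fo act Fm \<longleftrightarrow>
     (\<forall>X. finite X \<longrightarrow> is_rmodule (Fo X) (act X)) \<and>
     (\<forall>X Y A. finite X \<and> finite Y \<and> A \<in> hom X Y \<longrightarrow>
        (\<forall>v\<in>Fo X. Fm X Y A v \<in> Fo Y) \<and>
        (\<forall>v\<in>Fo X. \<forall>w\<in>Fo X. Fm X Y A (v + w) = Fm X Y A v + Fm X Y A w) \<and>
        (\<forall>v\<in>Fo X. \<forall>b. Fm X Y A (act X v b) = act Y (Fm X Y A v) b)) \<and>
     (\<forall>X. finite X \<longrightarrow> (\<forall>v\<in>Fo X. Fm X X (idm X) v = v)) \<and>
     (\<forall>X Y Z A C. finite X \<and> finite Y \<and> finite Z \<and> C \<in> hom X Y \<and> A \<in> hom Y Z \<longrightarrow>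
        (\<forall>v\<in>Fo X. Fm X Z (mcomp Y A C) v = Fm Y Z A (Fm X Y C v)))"

definition sgnv :: "nat \<Rightarrow> 'v::ab_group_add \<Rightarrow> 'v" where
  "sgnv k v = (if even k then v else - v)"

definition diamond ::
  "(nat set \<Rightarrow> nat set \<Rightarrow> 'b mat \<Rightarrow> 'v \<Rightarrow> 'v) \<Rightarrow> nat set \<Rightarrow> nat set \<Rightarrow> 'k set
     \<Rightarrow> ('k \<Rightarrow> ('b::comm_monoid_add) mat) \<Rightarrow> 'v::ab_group_add \<Rightarrow> 'v" where
  "diamond Fm X Y K \<alpha> v = (\<Sum>I\<in>Pow K. sgnv (card K - card I) (Fm X Y (msum I \<alpha>) v))"

definition poly_deg_le ::
  "(nat set \<Rightarrow> ('v::ab_group_add) set) \<Rightarrow> (nat set \<Rightarrow> nat set \<Rightarrow> ('b::comm_monoid_add) mat \<Rightarrow> 'v \<Rightarrow> 'v)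
     \<Rightarrow> nat \<Rightarrow> bool" where
  "poly_deg_le Fo Fm n \<longleftrightarrow>
     (\<forall>X Y (\<alpha>::nat \<Rightarrow> 'b mat). finite X \<and> finite Y \<and> (\<forall>i<Suc n. \<alpha> i \<in> hom X Y) \<longrightarrow>
        (\<forall>v\<in>Fo X. diamond Fm X Y {..<Suc n} \<alpha> v = 0))"

text \<open>cr_X F(B) = Im F(<>_{x in X} pi_x), a subset of F(B^X).\<close>
definition cr ::
  "(nat set \<Rightarrow> ('v::ab_group_add) set) \<Rightarrow> (nat set \<Rightarrow> nat set \<Rightarrow> ('b::{comm_monoid_add,one}) mat \<Rightarrow> 'v \<Rightarrow> 'v)
     \<Rightarrow> nat set \<Rightarrow> 'v set" where
  "cr Fo Fm X = diamond Fm X X X (\<lambda>x. sigma 1 x x) ` Fo X"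

text \<open>Passages: (source, target, label).  A maze X -> Y is a finite multiset of passages.\<close>
type_synonym 'b passage = "nat \<times> nat \<times> 'b"

definition is_maze :: "nat set \<Rightarrow> nat set \<Rightarrow> 'b passage multiset \<Rightarrow> bool" where
  "is_maze X Y P \<longleftrightarrow>
     (\<forall>(x, y, b) \<in> set_mset P. x \<in> X \<and> y \<in> Y) \<and>
     (\<forall>x\<in>X. \<exists>(x', y, b) \<in> set_mset P. x' = x) \<and>
     (\<forall>y\<in>Y. \<exists>(x, y', b) \<in> set_mset P. y' = y)"

definition occs :: "'b passage multiset \<Rightarrow> ('b passage \<times> nat) set" where
  "occs P = {(p, j). p \<in># P \<and> j < count P p}"

definition passage_map :: "('b::zero) passage \<Rightarrow> 'b mat" where
  "passage_map p = (case p of (x, y, b) \<Rightarrow> sigma b y x)"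

text \<open>Phi(F)(P) (before restriction to cr_X): F(<>_{p in P} label(p) sigma_{y_p x_p}).\<close>
definition Phi_maze ::
  "(nat set \<Rightarrow> nat set \<Rightarrow> ('b::comm_monoid_add) mat \<Rightarrow> 'v \<Rightarrow> 'v) \<Rightarrow> nat set \<Rightarrow> nat set
     \<Rightarrow> 'b passage multiset \<Rightarrow> 'v::ab_group_add \<Rightarrow> 'v" where
  "Phi_maze Fm X Y P v = diamond Fm X Y (occs P) (\<lambda>q. passage_map (fst q)) v"

end

theory Submission
  imports Defs "HOL-Library.Nat_Bijection"
begin


lemma sgnv_0[simp]: "sgnv 0 x = x" by (simp add: sgnv_def)
lemma sgnv_Suc[simp]: "sgnv (Suc k) x = - sgnv k x" by (simp add: sgnv_def)
lemma sgnv_add: "sgnv k (x + y) = sgnv k x + sgnv k y" by (simp add: sgnv_def)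
lemma sgnv_diff: "sgnv k (x - y) = sgnv k x - sgnv k y" by (simp add: sgnv_def)
lemma sgnv_zero[simp]: "sgnv k 0 = 0" by (simp add: sgnv_def)
lemma sgnv_sum: "sgnv k (sum f A) = (\<Sum>a\<in>A. sgnv k (f a))"
  by (simp add: sgnv_def sum_negf)
lemma sgnv_if: "sgnv k (if P then x else 0) = (if P then sgnv k x else 0)" by simp

lemma inj_insert_Pow: "a \<notin> K \<Longrightarrow> inj_on (insert a) (Pow K)"
  by (rule inj_onI) (metis PowD insert_ident subsetD)

definition alt :: "'k set \<Rightarrow> ('k set \<Rightarrow> 'v::ab_group_add) \<Rightarrow> 'v" where
  "alt K h = (\<Sum>I\<in>Pow K. sgnv (card K - card I) (h I))"

lemma diamond_alt: "diamond Fm X Y K \<alpha> v = alt K (\<lambda>I. Fm X Y (msum I \<alpha>) v)"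
  by (simp add: diamond_def alt_def)

lemma alt_cong: "(\<And>I. I \<subseteq> K \<Longrightarrow> h I = h' I) \<Longrightarrow> alt K h = alt K h'"
  unfolding alt_def by (rule sum.cong) auto

lemma alt_diff: "alt K (\<lambda>I. h1 I - h2 I) = alt K h1 - alt K h2"
  unfolding alt_def by (simp add: sgnv_diff sum_subtractf)

lemma alt_zero: "alt K (\<lambda>_. 0) = 0"
  unfolding alt_def by simp

lemma alt_empty: "alt {} h = h {}"
  unfolding alt_def by simp

lemma alt_ins:
  assumes "finite K" "a \<notin> K"
  shows "alt (insert a K) h = alt K (\<lambda>I. h (insert a I) - h I)"
proof -
  have d: "Pow K \<inter> insert a ` Pow K = {}" using assms by auto
  have inj: "inj_on (insert a) (Pow K)" using assms(2) by (rule inj_insert_Pow)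
  have "alt (insert a K) h = (\<Sum>I\<in>Pow K. sgnv (card (insert a K) - card I) (h I))
        + (\<Sum>I\<in>insert a ` Pow K. sgnv (card (insert a K) - card I) (h I))"
    unfolding alt_def Pow_insert using assms d by (simp add: sum.union_disjoint)
  also have "(\<Sum>I\<in>insert a ` Pow K. sgnv (card (insert a K) - card I) (h I))
     = (\<Sum>I\<in>Pow K. sgnv (card K - card I) (h (insert a I)))"
  proof -
    have "(\<Sum>I\<in>insert a ` Pow K. sgnv (card (insert a K) - card I) (h I))
       = (\<Sum>I\<in>Pow K. sgnv (card (insert a K) - card (insert a I)) (h (insert a I)))"
      by (simp add: sum.reindex[OF inj])
    also have "\<dots> = (\<Sum>I\<in>Pow K. sgnv (card K - card I) (h (insert a I)))"
    proof (rule sum.cong)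
      fix I assume "I \<in> Pow K"
      then have "finite I" "a \<notin> I" using assms finite_subset by auto
      then show "sgnv (card (insert a K) - card (insert a I)) (h (insert a I))
          = sgnv (card K - card I) (h (insert a I))" using assms by simp
    qed simp
    finally show ?thesis .
  qed
  also have "(\<Sum>I\<in>Pow K. sgnv (card (insert a K) - card I) (h I))
      = (\<Sum>I\<in>Pow K. - sgnv (card K - card I) (h I))"
  proof (rule sum.cong)
    fix I assume "I \<in> Pow K"
    then have "card I \<le> card K" using assms card_mono by auto
    then have "card (insert a K) - card I = Suc (card K - card I)" using assms by simp
    then show "sgnv (card (insert a K) - card I) (h I) = - sgnv (card K - card I) (h I)" by simp
  qed simp
  finally show ?thesis unfolding alt_def
    by (simp add: sgnv_diff sum_subtractf sum_negf)
qed

lemma alt_miss: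
  assumes "finite K" "a \<in> K" "\<And>I. I \<subseteq> K - {a} \<Longrightarrow> h (insert a I) = h I"
  shows "alt K h = 0"
proof -
  have "K = insert a (K - {a})" using assms by auto
  then have "alt K h = alt (K - {a}) (\<lambda>I. h (insert a I) - h I)"
    using alt_ins[of "K - {a}" a h] assms by simp
  also have "\<dots> = alt (K - {a}) (\<lambda>_. 0)" by (rule alt_cong) (simp add: assms)
  finally show ?thesis by (simp add: alt_zero)
qed

lemma alt_top:
  assumes "finite K" shows "alt K (\<lambda>I. if I = K then u else 0) = u"
  unfolding alt_def using assms by (simp add: sgnv_if sum.delta')

lemma mob:
  assumes "finite T" shows "(\<Sum>J\<in>Pow T. alt J h) = h T"
  using assms
proof (induction T arbitrary: h rule: finite_induct)
  case empty then show ?case by (simp add: alt_empty)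
next
  case (insert t T)
  have d: "Pow T \<inter> insert t ` Pow T = {}" using insert by auto
  have inj: "inj_on (insert t) (Pow T)" using insert(2) by (rule inj_insert_Pow)
  have "(\<Sum>J\<in>Pow (insert t T). alt J h) = (\<Sum>J\<in>Pow T. alt J h) + (\<Sum>J\<in>Pow T. alt (insert t J) h)"
    unfolding Pow_insert using insert d by (simp add: sum.union_disjoint sum.reindex[OF inj])
  also have "(\<Sum>J\<in>Pow T. alt (insert t J) h) = (\<Sum>J\<in>Pow T. alt J (\<lambda>I. h (insert t I) - h I))"
  proof (rule sum.cong)
    fix J assume "J \<in> Pow T"
    then have "finite J" "t \<notin> J" using insert finite_subset by auto
    then show "alt (insert t J) h = alt J (\<lambda>I. h (insert t I) - h I)" by (rule alt_ins)
  qed simp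
  finally show ?case using insert.IH by simp
qed

lemma alt_reindex:
  assumes "bij_betw g K' K" "finite K'"
  shows "alt K h = alt K' (\<lambda>I. h (g ` I))"
proof -
  have b: "bij_betw (image g) (Pow K') (Pow K)" by (rule bij_betw_Pow[OF assms(1)])
  have cK: "card K' = card K" by (rule bij_betw_same_card[OF assms(1)])
  have s1: "(\<Sum>I\<in>Pow K'. (\<lambda>I. sgnv (card K - card I) (h I)) (g ` I)) = (\<Sum>I\<in>Pow K. sgnv (card K - card I) (h I))"
    by (rule sum.reindex_bij_betw[OF b])
  have s2: "(\<Sum>I\<in>Pow K'. (\<lambda>I. sgnv (card K - card I) (h I)) (g ` I)) = (\<Sum>I\<in>Pow K'. sgnv (card K' - card I) (h (g ` I)))"
  proof (rule sum.cong)
    fix I assume "I \<in> Pow K'"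
    then have "inj_on g I" using assms(1) unfolding bij_betw_def using inj_on_subset by blast
    then have "card (g ` I) = card I" by (rule card_image)
    then show "(\<lambda>I. sgnv (card K - card I) (h I)) (g ` I) = sgnv (card K' - card I) (h (g ` I))"
      using cK by (simp only:)
  qed (rule refl)
  show ?thesis unfolding alt_def using s1 s2 by (simp only:)
qed

definition grp :: "'v::ab_group_add set \<Rightarrow> bool" where
  "grp M \<longleftrightarrow> 0 \<in> M \<and> (\<forall>v\<in>M. \<forall>w\<in>M. v + w \<in> M) \<and> (\<forall>v\<in>M. - v \<in> M)"

lemma grp_sum:
  assumes g: "grp M" shows "(\<And>a. a \<in> A \<Longrightarrow> f a \<in> M) \<Longrightarrow> sum f A \<in> M"
proof (induction A rule: infinite_finite_induct)
  case (infinite A) then show ?case using g by (simp add: grp_def)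
next
  case empty then show ?case using g by (simp add: grp_def)
next
  case (insert x F)
  then have "f x \<in> M" "sum f F \<in> M" by auto
  then show ?case using insert(1,2) g unfolding grp_def by simp
qed

lemma grp_sgnv: "grp M \<Longrightarrow> x \<in> M \<Longrightarrow> sgnv k x \<in> M"
  by (auto simp: grp_def sgnv_def)

lemma alt_closed: "grp M \<Longrightarrow> (\<And>I. I \<subseteq> K \<Longrightarrow> h I \<in> M) \<Longrightarrow> alt K h \<in> M"
  unfolding alt_def by (rule grp_sum) (auto intro: grp_sgnv)

lemma add_hom_0:
  fixes L :: "'a::ab_group_add \<Rightarrow> 'c::ab_group_add"
  assumes "grp M" "\<And>x y. x \<in> M \<Longrightarrow> y \<in> M \<Longrightarrow> L (x + y) = L x + L y"
  shows "L 0 = 0"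
proof -
  have m: "0 \<in> M" using assms(1) unfolding grp_def by blast
  have "L (0 + 0) = L 0 + L 0" by (rule assms(2)[OF m m])
  then have "L 0 + L 0 = L 0 + 0" by simp
  then show "L 0 = 0" by (simp only: add_left_cancel)
qed

lemma add_hom_neg:
  fixes L :: "'a::ab_group_add \<Rightarrow> 'c::ab_group_add"
  assumes "grp M" "\<And>x y. x \<in> M \<Longrightarrow> y \<in> M \<Longrightarrow> L (x + y) = L x + L y" "x \<in> M"
  shows "L (- x) = - L x"
proof -
  have m: "- x \<in> M" using assms(1,3) unfolding grp_def by blast
  have "L (x + - x) = L x + L (- x)" by (rule assms(2)[OF assms(3) m])
  then have "L x + L (- x) = 0" using add_hom_0[of M L, OF assms(1,2)] by simp
  then have "L (- x) + L x = 0" by (simp add: add.commute)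
  then show "L (- x) = - L x" by (simp only: eq_neg_iff_add_eq_0)
qed

lemmas add_hom_props = add_hom_0 add_hom_neg

lemma add_hom_sum:
  fixes L :: "'a::ab_group_add \<Rightarrow> 'c::ab_group_add"
  assumes "grp M" "\<And>x y. x \<in> M \<Longrightarrow> y \<in> M \<Longrightarrow> L (x + y) = L x + L y"
    "\<And>a. a \<in> A \<Longrightarrow> f a \<in> M"
  shows "L (sum f A) = (\<Sum>a\<in>A. L (f a))"
  using assms(3)
proof (induction A rule: infinite_finite_induct)
  have L0: "L 0 = 0" by (rule add_hom_props(1)[of M L]) (use assms in auto)
  case (infinite A) then show ?case using L0 by simp
next
  have L0: "L 0 = 0" by (rule add_hom_props(1)[of M L]) (use assms in auto)
  case empty then show ?case using L0 by simp
next
  case (insert x F)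
  then show ?case using assms(2) grp_sum[OF assms(1), of F f] by simp
qed

lemma alt_map:
  fixes L :: "'a::ab_group_add \<Rightarrow> 'c::ab_group_add"
  assumes "grp M" "\<And>x y. x \<in> M \<Longrightarrow> y \<in> M \<Longrightarrow> L (x + y) = L x + L y"
    "\<And>I. I \<subseteq> K \<Longrightarrow> h I \<in> M"
  shows "L (alt K h) = alt K (\<lambda>I. L (h I))"
proof -
  have sg: "L (sgnv k x) = sgnv k (L x)" if "x \<in> M" for k x
    using add_hom_props(2)[of M L x] assms(1,2) that by (simp add: sgnv_def)
  have "L (\<Sum>I\<in>Pow K. sgnv (card K - card I) (h I)) = (\<Sum>I\<in>Pow K. L (sgnv (card K - card I) (h I)))"
    by (rule add_hom_sum[of M L]) (use assms in \<open>auto intro: grp_sgnv\<close>)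
  also have "\<dots> = (\<Sum>I\<in>Pow K. sgnv (card K - card I) (L (h I)))"
    by (rule sum.cong) (use sg assms(3) in auto)
  finally show ?thesis unfolding alt_def .
qed



lemma alt_sum: "alt K (\<lambda>I. \<Sum>j\<in>A. c I j) = (\<Sum>j\<in>A. alt K (\<lambda>I. c I j))"
  unfolding alt_def by (simp add: sgnv_sum sum.swap[of _ "Pow K"])

lemma msum_reindex: "inj_on h I \<Longrightarrow> msum (h ` I) \<alpha> = msum I (\<alpha> \<circ> h)"
  unfolding msum_def by (auto simp: sum.reindex)

lemma diamond_reindex:
  assumes "bij_betw h K' K" "finite K'"
  shows "diamond Fm X Y K \<alpha> v = diamond Fm X Y K' (\<alpha> \<circ> h) v"
  unfolding diamond_alt
  apply (subst alt_reindex[OF assms])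
  apply (rule alt_cong)
  using assms(1) by (metis bij_betw_def inj_on_subset msum_reindex)

lemma msum_hom: "(\<And>i. i \<in> I \<Longrightarrow> \<alpha> i \<in> hom X Y) \<Longrightarrow> msum I \<alpha> \<in> hom X Y"
  unfolding msum_def hom_def
  by (auto, (metis (mono_tags, lifting) sum.neutral)+)

lemma mcomp_hom: "C \<in> hom X Y \<Longrightarrow> A \<in> hom Y Z \<Longrightarrow> mcomp Y A C \<in> hom X Z"
  unfolding mcomp_def hom_def
  by (auto, (metis (mono_tags, lifting) mult_not_zero sum.neutral)+)

lemma sigma_hom: "x \<in> X \<Longrightarrow> y \<in> Y \<Longrightarrow> sigma b y x \<in> hom X Y"
  unfolding sigma_def hom_def by auto

lemma idm_hom: "J \<subseteq> Z \<Longrightarrow> idm J \<in> hom Z J" "J \<subseteq> Z \<Longrightarrow> idm J \<in> hom J Z"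
  unfolding idm_def hom_def by auto

abbreviation pi :: "nat \<Rightarrow> ('b::{zero,one}) mat" where "pi \<equiv> (\<lambda>z. sigma 1 z z)"

lemma sum_ind: "finite T \<Longrightarrow> (\<Sum>i\<in>T. if y = i \<and> x = i then c else 0) = (if y \<in> T \<and> x = y then c else 0)"
proof -
  assume f: "finite T"
  have "(\<lambda>i. if y = i \<and> x = i then c else 0) = (\<lambda>i. if i = y then (if x = y then c else 0) else 0)"
    by auto
  then show ?thesis using f by (simp only:) (simp add: sum.delta')
qed

lemma msum_pi: "finite T \<Longrightarrow> msum T pi = (\<lambda>y x. if y \<in> T \<and> x = y then (1::'b::semiring_1) else 0)"
  unfolding msum_def sigma_def
  by (intro ext) (simp add: sum_ind)

lemma L_left: "finite X \<Longrightarrow> (\<Sum>y\<in>X. (if z \<in> T \<and> y = z then 1 else 0) * B y) = (if z \<in> X \<and> z \<in> T then B z else (0::'b::semiring_1))"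
proof -
  assume f: "finite X"
  have "(\<lambda>y. (if z \<in> T \<and> y = z then 1 else 0) * B y) = (\<lambda>y. if y = z then (if z \<in> T then B z else 0) else 0)"
    by auto
  then show ?thesis using f by (simp only:) (simp add: sum.delta')
qed

lemma L_right: "finite X \<Longrightarrow> (\<Sum>y\<in>X. A y * (if y \<in> T \<and> x = y then 1 else 0)) = (if x \<in> X \<and> x \<in> T then A x else (0::'b::semiring_1))"
proof -
  assume f: "finite X"
  have "(\<lambda>y. A y * (if y \<in> T \<and> x = y then 1 else 0)) = (\<lambda>y. if y = x then (if x \<in> T then A x else 0) else 0)"
    by auto
  then show ?thesis using f by (simp only:) (simp add: sum.delta')
qed

lemma PT_hom: "T \<subseteq> Z \<Longrightarrow> msum T pi \<in> hom Z Z"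
  by (rule msum_hom) (auto intro: sigma_hom)

lemma msum_pi_X: "finite X \<Longrightarrow> msum X pi = (idm X :: ('b::semiring_1) mat)"
  unfolding msum_pi idm_def by (intro ext) auto

lemma mcomp_idm_pi:
  assumes "finite J" "I \<subseteq> J"
  shows "mcomp J (idm J) (mcomp J (msum I pi) (idm J)) = (msum I pi :: ('b::semiring_1) mat)"
proof -
  have fI: "finite I" using assms finite_subset by auto
  show ?thesis unfolding msum_pi_X[OF assms(1), symmetric]
    unfolding msum_pi[OF fI] msum_pi[OF assms(1)] mcomp_def
    using assms
    by (intro ext) (auto simp: L_left L_right)
qed

lemma mcomp_PT:
  assumes "finite X" "I \<subseteq> X" "J \<subseteq> X"
  shows "mcomp X (msum I pi) (msum J pi) = (msum (I \<inter> J) pi :: ('b::semiring_1) mat)"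
proof -
  have f1: "finite I" "finite J" using assms finite_subset by auto
  then have f: "finite I" "finite J" "finite (I \<inter> J)" by auto
  show ?thesis unfolding msum_pi[OF f(1)] msum_pi[OF f(2)] msum_pi[OF f(3)] mcomp_def
    using assms by (intro ext) (auto simp: L_left L_right)
qed



locale mf =
  fixes Fo :: "nat set \<Rightarrow> 'v::ab_group_add set"
    and act :: "nat set \<Rightarrow> 'v \<Rightarrow> 'b::ring_1 \<Rightarrow> 'v"
    and Fm :: "nat set \<Rightarrow> nat set \<Rightarrow> 'b mat \<Rightarrow> 'v \<Rightarrow> 'v"
  assumes mf: "module_functor Fo act Fm"
begin

lemma rmod_grp: "is_rmodule M a \<Longrightarrow> grp M"
  unfolding is_rmodule_def grp_def by (elim conjE) (intro conjI; assumption)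

lemma mfD:
  "finite X \<Longrightarrow> is_rmodule (Fo X) (act X)"
  "finite X \<Longrightarrow> finite Y \<Longrightarrow> A \<in> hom X Y \<Longrightarrow>
        (\<forall>v\<in>Fo X. Fm X Y A v \<in> Fo Y) \<and>
        (\<forall>v\<in>Fo X. \<forall>w\<in>Fo X. Fm X Y A (v + w) = Fm X Y A v + Fm X Y A w) \<and>
        (\<forall>v\<in>Fo X. \<forall>b. Fm X Y A (act X v b) = act Y (Fm X Y A v) b)"
  "finite X \<Longrightarrow> (\<forall>v\<in>Fo X. Fm X X (idm X) v = v)"
  "finite X \<Longrightarrow> finite Y \<Longrightarrow> finite Z \<Longrightarrow> C \<in> hom X Y \<Longrightarrow> A \<in> hom Y Z \<Longrightarrow>
        v \<in> Fo X \<Longrightarrow> Fm X Z (mcomp Y A C) v = Fm Y Z A (Fm X Y C v)"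
proof -
  note m = mf[unfolded module_functor_def]
  note m1 = m[THEN conjunct1] and m2 = m[THEN conjunct2, THEN conjunct1]
    and m3 = m[THEN conjunct2, THEN conjunct2, THEN conjunct1]
    and m4 = m[THEN conjunct2, THEN conjunct2, THEN conjunct2]
  show "finite X \<Longrightarrow> is_rmodule (Fo X) (act X)" by (rule m1[rule_format])
  show "finite X \<Longrightarrow> finite Y \<Longrightarrow> A \<in> hom X Y \<Longrightarrow>
        (\<forall>v\<in>Fo X. Fm X Y A v \<in> Fo Y) \<and>
        (\<forall>v\<in>Fo X. \<forall>w\<in>Fo X. Fm X Y A (v + w) = Fm X Y A v + Fm X Y A w) \<and>
        (\<forall>v\<in>Fo X. \<forall>b. Fm X Y A (act X v b) = act Y (Fm X Y A v) b)"
    by (rule m2[rule_format]) (intro conjI; assumption)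
  show "finite X \<Longrightarrow> (\<forall>v\<in>Fo X. Fm X X (idm X) v = v)" using m3 by blast
  show "finite X \<Longrightarrow> finite Y \<Longrightarrow> finite Z \<Longrightarrow> C \<in> hom X Y \<Longrightarrow> A \<in> hom Y Z \<Longrightarrow>
        v \<in> Fo X \<Longrightarrow> Fm X Z (mcomp Y A C) v = Fm Y Z A (Fm X Y C v)"
    apply (rule m4[rule_format])
     apply (intro conjI; assumption)
    apply assumption
    done
qed

lemma grpF: "finite X \<Longrightarrow> grp (Fo X)"
  by (rule rmod_grp[OF mfD(1)])

lemma Fm_in: "finite X \<Longrightarrow> finite Y \<Longrightarrow> A \<in> hom X Y \<Longrightarrow> v \<in> Fo X \<Longrightarrow> Fm X Y A v \<in> Fo Y"
  using mfD(2)[THEN conjunct1] by blast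

lemma Fm_add: "finite X \<Longrightarrow> finite Y \<Longrightarrow> A \<in> hom X Y \<Longrightarrow> v \<in> Fo X \<Longrightarrow> w \<in> Fo X
   \<Longrightarrow> Fm X Y A (v + w) = Fm X Y A v + Fm X Y A w"
  using mfD(2)[THEN conjunct2, THEN conjunct1] by blast

lemma Fm_comp: "finite X \<Longrightarrow> finite Y \<Longrightarrow> finite Z \<Longrightarrow> C \<in> hom X Y \<Longrightarrow> A \<in> hom Y Z \<Longrightarrow> v \<in> Fo X
   \<Longrightarrow> Fm X Z (mcomp Y A C) v = Fm Y Z A (Fm X Y C v)"
  by (rule mfD(4))

lemma Fm_id: "finite X \<Longrightarrow> v \<in> Fo X \<Longrightarrow> Fm X X (idm X) v = v"
  using mfD(3) by blast

lemma Fm_zero: "finite X \<Longrightarrow> finite Y \<Longrightarrow> A \<in> hom X Y \<Longrightarrow> Fm X Y A 0 = 0"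
  by (rule add_hom_props(1)[of "Fo X"]) (auto intro: grpF Fm_add)

lemma Fm_alt: "finite X \<Longrightarrow> finite Y \<Longrightarrow> A \<in> hom X Y \<Longrightarrow> (\<And>I. I \<subseteq> K \<Longrightarrow> h I \<in> Fo X)
   \<Longrightarrow> Fm X Y A (alt K h) = alt K (\<lambda>I. Fm X Y A (h I))"
  by (rule alt_map[of "Fo X"]) (auto intro: grpF Fm_add)

lemma diamond_in: "finite X \<Longrightarrow> finite Y \<Longrightarrow> (\<And>I. I \<subseteq> K \<Longrightarrow> msum I \<alpha> \<in> hom X Y) \<Longrightarrow> v \<in> Fo X
   \<Longrightarrow> diamond Fm X Y K \<alpha> v \<in> Fo Y"
  unfolding diamond_alt by (rule alt_closed) (auto intro: grpF Fm_in)

lemma hom_add: fixes A B :: "'b mat" shows "A \<in> hom X Y \<Longrightarrow> B \<in> hom X Y \<Longrightarrow> (\<lambda>y x. A y x + B y x) \<in> hom X Y"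
proof -
  assume A: "A \<in> hom X Y" and B: "B \<in> hom X Y"
  show ?thesis unfolding hom_def mem_Collect_eq
  proof (intro allI impI)
    fix y x assume "A y x + B y x \<noteq> 0"
    then have "A y x \<noteq> 0 \<or> B y x \<noteq> 0" by auto
    then show "y \<in> Y \<and> x \<in> X" using A B unfolding hom_def by blast
  qed
qed

lemma msum_merge:
  assumes "finite I" "a \<notin> I" "b \<notin> I" "a \<noteq> b"
  shows "msum (insert a I) (\<alpha>(a := (\<lambda>y x. \<alpha> a y x + \<alpha> b y x))) = msum (insert a (insert b I)) \<alpha>"
    "msum I (\<alpha>(a := (\<lambda>y x. \<alpha> a y x + \<alpha> b y x))) = msum I \<alpha>"
proof -
  define \<alpha>' where "\<alpha>' = \<alpha>(a := (\<lambda>y x. \<alpha> a y x + \<alpha> b y x))"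
  have c: "(\<Sum>i\<in>I. \<alpha>' i y x) = (\<Sum>i\<in>I. \<alpha> i y x)" for y x
    by (rule sum.cong) (use assms in \<open>auto simp: \<alpha>'_def\<close>)
  have a': "\<alpha>' a y x = \<alpha> a y x + \<alpha> b y x" for y x by (simp add: \<alpha>'_def)
  show "msum I \<alpha>' = msum I \<alpha>" unfolding msum_def using c by simp
  show "msum (insert a I) \<alpha>' = msum (insert a (insert b I)) \<alpha>"
  proof (intro ext)
    fix y x
    have "msum (insert a I) \<alpha>' y x = \<alpha>' a y x + (\<Sum>i\<in>I. \<alpha>' i y x)"
      unfolding msum_def by (rule sum.insert[OF assms(1,2)])
    also have "\<dots> = \<alpha> a y x + (\<alpha> b y x + (\<Sum>i\<in>I. \<alpha> i y x))" by (simp only: a' c add.assoc)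
    also have "\<dots> = msum (insert a (insert b I)) \<alpha> y x"
      unfolding msum_def using assms by simp
    finally show "msum (insert a I) \<alpha>' y x = msum (insert a (insert b I)) \<alpha> y x" .
  qed
qed

lemma G:
  assumes poly: "poly_deg_le Fo Fm n" and XY: "finite X" "finite Y"
    and K: "finite K" "card K > n" and h: "\<forall>i\<in>K. \<alpha> i \<in> hom X Y" and v: "v \<in> Fo X"
  shows "diamond Fm X Y K \<alpha> v = 0"
proof -
  obtain d where "card K = Suc n + d" using K(2) by (metis less_iff_Suc_add add_Suc)
  then show ?thesis using K(1) h
  proof (induction d arbitrary: K \<alpha>)
    case 0
    obtain g where g: "bij_betw g {0..<card K} K" using ex_bij_betw_nat_finite[OF 0(2)] by blast
    have "diamond Fm X Y K \<alpha> v = diamond Fm X Y {0..<card K} (\<alpha> \<circ> g) v"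
      by (rule diamond_reindex[OF g]) simp
    also have "\<dots> = 0"
    proof -
      have "\<forall>i<Suc n. (\<alpha> \<circ> g) i \<in> hom X Y"
        using 0 g by (auto simp: bij_betw_def)
      then have "diamond Fm X Y {..<Suc n} (\<alpha> \<circ> g) v = 0"
        using poly XY v unfolding poly_deg_le_def by blast
      then show ?thesis using 0 by (simp add: atLeast0LessThan)
    qed
    finally show ?case .
  next
    case (Suc d)
    have "card K \<ge> 2" using Suc by simp
    then obtain a where a: "a \<in> K" by fastforce
    have "card (K - {a}) \<ge> 1" using Suc a by simp
    then have "K - {a} \<noteq> {}" by (metis card.empty not_one_le_zero)
    then obtain b where b: "b \<in> K - {a}" by blast
    define K0 where "K0 = K - {a, b}"
    have fK0: "finite K0" using Suc K0_def by simp
    have Keq: "K = insert a (insert b K0)" using a b K0_def by auto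
    have nab: "a \<notin> K0" "b \<notin> K0" "a \<noteq> b" using b K0_def by auto
    have cK0: "card K0 = n + d" using Suc Keq nab fK0 by simp
    define f where "f I = Fm X Y (msum I \<alpha>) v" for I
    define \<alpha>' where "\<alpha>' = \<alpha>(a := (\<lambda>y x. \<alpha> a y x + \<alpha> b y x))"
    have ha: "\<alpha> a \<in> hom X Y" "\<alpha> b \<in> hom X Y" using Suc.prems(3) a b by auto
    have hom': "\<forall>i\<in>insert a K0. \<alpha>' i \<in> hom X Y"
    proof
      fix i assume i: "i \<in> insert a K0"
      show "\<alpha>' i \<in> hom X Y"
      proof (cases "i = a")
        case True then show ?thesis unfolding \<alpha>'_def using hom_add[OF ha] by simp
      next
        case False
        have "i \<in> K" using i Keq by blast
        then have "\<alpha> i \<in> hom X Y" using Suc.prems(3) by blast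
        then show ?thesis using False by (simp add: \<alpha>'_def)
      qed
    qed
    have z1: "diamond Fm X Y (insert a K0) \<alpha>' v = 0"
      by (rule Suc.IH) (use cK0 fK0 hom' nab in auto)
    have z2: "diamond Fm X Y (insert a K0) \<alpha> v = 0"
      by (rule Suc.IH) (use cK0 fK0 Suc.prems(3) Keq nab in auto)
    have z3: "diamond Fm X Y (insert b K0) \<alpha> v = 0"
      by (rule Suc.IH) (use cK0 fK0 Suc.prems(3) Keq nab in auto)
    have "diamond Fm X Y K \<alpha> v = alt (insert a (insert b K0)) f"
      unfolding diamond_alt f_def Keq ..
    also have "\<dots> = alt (insert b K0) (\<lambda>I. f (insert a I) - f I)"
      by (rule alt_ins) (use fK0 nab in auto)
    also have "\<dots> = alt K0 (\<lambda>I. (f (insert a (insert b I)) - f (insert b I)) - (f (insert a I) - f I))"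
      by (rule alt_ins) (use fK0 nab in auto)
    also have "\<dots> = alt K0 (\<lambda>I. ((f (insert a (insert b I)) - f I) - (f (insert a I) - f I)) - (f (insert b I) - f I))"
      by (rule alt_cong) (simp add: algebra_simps)
    also have "\<dots> = alt K0 (\<lambda>I. f (insert a (insert b I)) - f I) - alt K0 (\<lambda>I. f (insert a I) - f I)
        - alt K0 (\<lambda>I. f (insert b I) - f I)"
      by (simp add: alt_diff)
    also have "alt K0 (\<lambda>I. f (insert a I) - f I) = diamond Fm X Y (insert a K0) \<alpha> v"
      unfolding diamond_alt f_def by (rule alt_ins[symmetric]) (use fK0 nab in auto)
    also have "alt K0 (\<lambda>I. f (insert b I) - f I) = diamond Fm X Y (insert b K0) \<alpha> v"
      unfolding diamond_alt f_def by (rule alt_ins[symmetric]) (use fK0 nab in auto)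
    also have "alt K0 (\<lambda>I. f (insert a (insert b I)) - f I) = diamond Fm X Y (insert a K0) \<alpha>' v"
    proof -
      have "diamond Fm X Y (insert a K0) \<alpha>' v = alt K0 (\<lambda>I. Fm X Y (msum (insert a I) \<alpha>') v - Fm X Y (msum I \<alpha>') v)"
        unfolding diamond_alt by (rule alt_ins) (use fK0 nab in auto)
      also have "\<dots> = alt K0 (\<lambda>I. f (insert a (insert b I)) - f I)"
      proof (rule alt_cong)
        fix I assume I: "I \<subseteq> K0"
        then have "finite I" "a \<notin> I" "b \<notin> I" using fK0 nab finite_subset by auto
        then show "Fm X Y (msum (insert a I) \<alpha>') v - Fm X Y (msum I \<alpha>') v = f (insert a (insert b I)) - f I"
          unfolding f_def \<alpha>'_def using msum_merge[of I a b \<alpha>] nab by simp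
      qed
      finally show ?thesis ..
    qed
    finally show ?case using z1 z2 z3 by simp
  qed
qed


lemma diamond_pi_fact:
  assumes Z: "finite Z" "J \<subseteq> Z" and w: "w \<in> Fo Z"
  shows "diamond Fm Z Z J pi w = Fm J Z (idm J) (diamond Fm J J J pi (Fm Z J (idm J) w))"
proof -
  have fJ: "finite J" using Z finite_subset by blast
  have i1: "idm J \<in> hom Z J" and i2: "idm J \<in> hom J Z" using Z(2) by (rule idm_hom)+
  have u: "Fm Z J (idm J) w \<in> Fo J" by (rule Fm_in[OF Z(1) fJ i1 w])
  have "Fm J Z (idm J) (diamond Fm J J J pi (Fm Z J (idm J) w))
      = alt J (\<lambda>I. Fm J Z (idm J) (Fm J J (msum I pi) (Fm Z J (idm J) w)))"
    unfolding diamond_alt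
  proof (rule Fm_alt[OF fJ Z(1) i2])
    fix I assume "I \<subseteq> J"
    then have "msum I pi \<in> hom J J" by (rule PT_hom)
    then show "Fm J J (msum I pi) (Fm Z J (idm J) w) \<in> Fo J" by (rule Fm_in[OF fJ fJ _ u])
  qed
  also have "\<dots> = alt J (\<lambda>I. Fm Z Z (msum I pi) w)"
  proof (rule alt_cong)
    fix I assume I: "I \<subseteq> J"
    have pI: "msum I pi \<in> hom J J" using I by (rule PT_hom)
    have c1: "mcomp J (msum I pi) (idm J) \<in> hom Z J" by (rule mcomp_hom[OF i1 pI])
    have "Fm Z Z (msum I pi) w = Fm Z Z (mcomp J (idm J) (mcomp J (msum I pi) (idm J))) w"
      by (subst mcomp_idm_pi[OF fJ I]) (rule refl)
    also have "\<dots> = Fm J Z (idm J) (Fm Z J (mcomp J (msum I pi) (idm J)) w)"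
      by (rule Fm_comp[OF Z(1) fJ Z(1) c1 i2 w])
    also have "Fm Z J (mcomp J (msum I pi) (idm J)) w = Fm J J (msum I pi) (Fm Z J (idm J) w)"
      by (rule Fm_comp[OF Z(1) fJ fJ i1 pI w])
    finally show "Fm J Z (idm J) (Fm J J (msum I pi) (Fm Z J (idm J) w)) = Fm Z Z (msum I pi) w" by simp
  qed
  finally show ?thesis unfolding diamond_alt by simp
qed

lemma diamond_pi_zero:
  assumes C1: "\<forall>J. finite J \<and> card J > n \<longrightarrow> cr Fo Fm J = {0}"
    and Z: "finite Z" "J \<subseteq> Z" and c: "card J > n" and w: "w \<in> Fo Z"
  shows "diamond Fm Z Z J pi w = 0"
proof -
  have fJ: "finite J" using Z finite_subset by blast
  have i1: "idm J \<in> hom Z J" and i2: "idm J \<in> hom J Z" using Z(2) by (rule idm_hom)+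
  have u: "Fm Z J (idm J) w \<in> Fo J" by (rule Fm_in[OF Z(1) fJ i1 w])
  have "diamond Fm J J J pi (Fm Z J (idm J) w) \<in> cr Fo Fm J"
    unfolding cr_def using u by (rule imageI)
  then have "diamond Fm J J J pi (Fm Z J (idm J) w) = 0" using C1 fJ c by blast
  then show ?thesis using diamond_pi_fact[OF Z w] Fm_zero[OF fJ Z(1) i2] by simp
qed

end


lemma sum_delta_mult: "finite X \<Longrightarrow> (\<Sum>x'\<in>X. f x' * (if x' = x then 1 else 0)) = (if x \<in> X then f x else (0::'b::semiring_1))"
proof -
  assume fX: "finite X"
  have "(\<lambda>x'. f x' * (if x' = x then 1 else 0)) = (\<lambda>x'. if x' = x then f x else 0)" by auto
  then show ?thesis using fX by (simp only:) (simp add: sum.delta)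
qed

lemma occs_fin_card: "finite (occs P) \<and> card (occs P) = size P"
proof -
  have e: "occs P = Sigma (set_mset P) (\<lambda>p. {..<count P p})" unfolding occs_def by auto
  have "card (Sigma (set_mset P) (\<lambda>p. {..<count P p})) = (\<Sum>p\<in>set_mset P. count P p)" by simp
  also have "\<dots> = size P" by (simp add: size_multiset_overloaded_eq)
  finally show ?thesis unfolding e by simp
qed

context mf begin

lemma cr_to_poly:
  assumes C1: "\<forall>J. finite J \<and> card J > n \<longrightarrow> cr Fo Fm J = {0}"
  shows "poly_deg_le Fo Fm n"
  unfolding poly_deg_le_def
proof (intro allI impI ballI)
  fix X Y :: "nat set" and \<alpha> :: "nat \<Rightarrow> 'b mat" and v
  assume H: "finite X \<and> finite Y \<and> (\<forall>i<Suc n. \<alpha> i \<in> hom X Y)" and v: "v \<in> Fo X"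
  have fX: "finite X" and fY: "finite Y" and h\<alpha>: "\<And>i. i < Suc n \<Longrightarrow> \<alpha> i \<in> hom X Y" using H by auto
  define K where "K = {..<Suc n}"
  define enc :: "nat \<times> nat \<Rightarrow> nat" where "enc = prod_encode"
  define src where "src z = fst (prod_decode z)" for z
  define idx where "idx z = snd (prod_decode z)" for z
  define Z where "Z = enc ` (X \<times> K)"
  define S where "S I = enc ` (X \<times> I)" for I
  define \<beta> :: "'b mat" where "\<beta> = (\<lambda>z x. if z \<in> Z \<and> src z = x then 1 else 0)"
  define \<gamma> :: "'b mat" where "\<gamma> = (\<lambda>y z. if z \<in> Z then \<alpha> (idx z) y (src z) else 0)"
  have fK: "finite K" by (simp add: K_def)
  have fZ: "finite Z" unfolding Z_def using fX fK by simp
  have injE: "inj enc" unfolding enc_def by (rule inj_prod_encode)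
  have sd: "src (enc p) = fst p" "idx (enc p) = snd p" for p unfolding src_def idx_def enc_def by simp_all
  have SZ: "S I \<subseteq> Z" if "I \<subseteq> K" for I unfolding S_def Z_def using that by auto
  have fS: "finite (S I)" if "I \<subseteq> K" for I using SZ[OF that] fZ finite_subset by blast
  have Zsrc: "src z \<in> X \<and> idx z \<in> K" if "z \<in> Z" for z using that unfolding Z_def using sd by auto
  have \<beta>hom: "\<beta> \<in> hom X Z" unfolding hom_def \<beta>_def using Zsrc by auto
  have \<gamma>hom: "\<gamma> \<in> hom Z Y" unfolding hom_def mem_Collect_eq
  proof (intro allI impI)
    fix y z assume nz: "\<gamma> y z \<noteq> 0"
    then have z: "z \<in> Z" and a: "\<alpha> (idx z) y (src z) \<noteq> 0" unfolding \<gamma>_def by (auto split: if_splits)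
    have "idx z < Suc n" using Zsrc[OF z] by (simp add: K_def)
    then have "\<alpha> (idx z) \<in> hom X Y" by (rule h\<alpha>)
    then have "y \<in> Y" using a unfolding hom_def by blast
    then show "y \<in> Y \<and> z \<in> Z" using z by blast
  qed
  define w where "w = Fm X Z \<beta> v"
  have w: "w \<in> Fo Z" unfolding w_def by (rule Fm_in[OF fX fZ \<beta>hom v])
  have mc: "mcomp Z A M y x = (\<Sum>z\<in>Z. A y z * M z x)" for A M :: "'b mat" and y x
    by (simp add: mcomp_def)
  have mat: "msum I \<alpha> = mcomp Z \<gamma> (mcomp Z (msum (S I) pi) \<beta>)" if I: "I \<subseteq> K" for I
  proof (intro ext)
    fix y x
    have fI: "finite I" using I fK finite_subset by blast
    have inner: "mcomp Z (msum (S I) pi) \<beta> z x = (if z \<in> S I then \<beta> z x else 0)" for z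
    proof -
      have "mcomp Z (msum (S I) pi) \<beta> z x = (\<Sum>y'\<in>Z. (if z \<in> S I \<and> y' = z then 1 else 0) * \<beta> y' x)"
        unfolding mc msum_pi[OF fS[OF I]] by (rule refl)
      also have "\<dots> = (if z \<in> Z \<and> z \<in> S I then \<beta> z x else 0)" by (rule L_left[OF fZ])
      finally show ?thesis using SZ[OF I] by auto
    qed
    have "mcomp Z \<gamma> (mcomp Z (msum (S I) pi) \<beta>) y x = (\<Sum>z\<in>Z. \<gamma> y z * (if z \<in> S I then \<beta> z x else 0))"
      unfolding mc[of \<gamma>] inner by (rule refl)
    also have "\<dots> = (\<Sum>z\<in>Z. if z \<in> S I then \<gamma> y z * \<beta> z x else 0)"
      by (rule sum.cong) auto
    also have "\<dots> = (\<Sum>z\<in>{z\<in>Z. z \<in> S I}. \<gamma> y z * \<beta> z x)"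
      by (rule sum.inter_filter[OF fZ, symmetric])
    also have "{z\<in>Z. z \<in> S I} = S I" using SZ[OF I] by auto
    also have "(\<Sum>z\<in>S I. \<gamma> y z * \<beta> z x) = (\<Sum>p\<in>X \<times> I. \<gamma> y (enc p) * \<beta> (enc p) x)"
      unfolding S_def by (rule sum.reindex_cong[OF inj_on_subset[OF injE subset_UNIV] refl refl])
    also have "\<dots> = (\<Sum>p\<in>X \<times> I. \<alpha> (snd p) y (fst p) * (if fst p = x then 1 else 0))"
    proof (rule sum.cong[OF refl])
      fix p assume p: "p \<in> X \<times> I"
      then have "enc p \<in> Z" unfolding Z_def using I by auto
      then show "\<gamma> y (enc p) * \<beta> (enc p) x = \<alpha> (snd p) y (fst p) * (if fst p = x then 1 else 0)"
        unfolding \<gamma>_def \<beta>_def by (simp add: sd)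
    qed
    also have "\<dots> = (\<Sum>x'\<in>X. \<Sum>i\<in>I. \<alpha> i y x' * (if x' = x then 1 else 0))"
      by (simp add: sum.cartesian_product split_def)
    also have "\<dots> = (\<Sum>i\<in>I. \<Sum>x'\<in>X. \<alpha> i y x' * (if x' = x then 1 else 0))"
      by (rule sum.swap)
    also have "\<dots> = (\<Sum>i\<in>I. if x \<in> X then \<alpha> i y x else 0)"
      by (rule sum.cong[OF refl]) (rule sum_delta_mult[OF fX])
    also have "\<dots> = (\<Sum>i\<in>I. \<alpha> i y x)"
    proof (rule sum.cong[OF refl])
      fix i assume "i \<in> I"
      then have "i < Suc n" using I by (auto simp: K_def)
      then have "\<alpha> i \<in> hom X Y" by (rule h\<alpha>)
      then show "(if x \<in> X then \<alpha> i y x else 0) = \<alpha> i y x" unfolding hom_def by auto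
    qed
    also have "\<dots> = msum I \<alpha> y x" by (simp add: msum_def)
    finally show "msum I \<alpha> y x = mcomp Z \<gamma> (mcomp Z (msum (S I) pi) \<beta>) y x" by simp
  qed
  have comp: "Fm X Y (msum I \<alpha>) v = Fm Z Y \<gamma> (Fm Z Z (msum (S I) pi) w)" if I: "I \<subseteq> K" for I
  proof -
    have P: "msum (S I) pi \<in> hom Z Z" by (rule PT_hom[OF SZ[OF I]])
    have c: "mcomp Z (msum (S I) pi) \<beta> \<in> hom X Z" by (rule mcomp_hom[OF \<beta>hom P])
    have "Fm X Y (msum I \<alpha>) v = Fm X Y (mcomp Z \<gamma> (mcomp Z (msum (S I) pi) \<beta>)) v"
      by (subst mat[OF I]) (rule refl)
    also have "\<dots> = Fm Z Y \<gamma> (Fm X Z (mcomp Z (msum (S I) pi) \<beta>) v)"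
      by (rule Fm_comp[OF fX fZ fY c \<gamma>hom v])
    also have "Fm X Z (mcomp Z (msum (S I) pi) \<beta>) v = Fm Z Z (msum (S I) pi) w"
      unfolding w_def by (rule Fm_comp[OF fX fZ fZ \<beta>hom P v])
    finally show ?thesis .
  qed
  define hh where "hh I = Fm Z Z (msum (S I) pi) w" for I
  define g where "g J = diamond Fm Z Z J pi w" for J
  have hhin: "hh I \<in> Fo Z" if "I \<subseteq> K" for I
    unfolding hh_def by (rule Fm_in[OF fZ fZ PT_hom[OF SZ[OF that]] w])
  have gz: "g J = 0" if "J \<subseteq> Z" "card J > n" for J
    unfolding g_def by (rule diamond_pi_zero[OF C1 fZ that w])
  have hh_eq: "hh I = (\<Sum>J\<in>Pow Z. if J \<subseteq> S I then g J else 0)" if I: "I \<subseteq> K" for I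
  proof -
    have "hh I = (\<Sum>J\<in>Pow (S I). alt J (\<lambda>T. Fm Z Z (msum T pi) w))"
      unfolding hh_def by (rule mob[OF fS[OF I], of "\<lambda>T. Fm Z Z (msum T pi) w", symmetric])
    also have "\<dots> = (\<Sum>J\<in>Pow (S I). g J)" unfolding g_def diamond_alt by (rule refl)
    also have "Pow (S I) = {J \<in> Pow Z. J \<subseteq> S I}" using SZ[OF I] by auto
    also have "(\<Sum>J\<in>{J \<in> Pow Z. J \<subseteq> S I}. g J) = (\<Sum>J\<in>Pow Z. if J \<subseteq> S I then g J else 0)"
      by (rule sum.inter_filter) (simp add: fZ)
    finally show ?thesis .
  qed
  have alt0: "alt K hh = 0"
  proof -
    have "alt K hh = alt K (\<lambda>I. \<Sum>J\<in>Pow Z. if J \<subseteq> S I then g J else 0)"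
      by (rule alt_cong) (rule hh_eq)
    also have "\<dots> = (\<Sum>J\<in>Pow Z. alt K (\<lambda>I. if J \<subseteq> S I then g J else 0))" by (rule alt_sum)
    also have "\<dots> = (\<Sum>J\<in>Pow Z. 0)"
    proof (rule sum.cong[OF refl])
      fix J assume J: "J \<in> Pow Z"
      show "alt K (\<lambda>I. if J \<subseteq> S I then g J else 0) = 0"
      proof (cases "K \<subseteq> idx ` J")
        case True
        have fJ: "finite J" using J fZ finite_subset by auto
        have "card K \<le> card (idx ` J)" by (rule card_mono[OF finite_imageI[OF fJ] True])
        also have "\<dots> \<le> card J" by (rule card_image_le[OF fJ])
        finally have "card J > n" by (simp add: K_def)
        then have gJ: "g J = 0" using gz J by auto
        have "alt K (\<lambda>I. if J \<subseteq> S I then g J else 0) = alt K (\<lambda>_. 0)"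
          by (rule alt_cong) (simp add: gJ)
        then show ?thesis by (simp only: alt_zero)
      next
        case False
        then obtain i0 where i0: "i0 \<in> K" "i0 \<notin> idx ` J" by auto
        show ?thesis
        proof (rule alt_miss[OF fK i0(1)])
          fix I assume I: "I \<subseteq> K - {i0}"
          have "J \<subseteq> S (insert i0 I) \<longleftrightarrow> J \<subseteq> S I"
          proof
            assume a: "J \<subseteq> S (insert i0 I)"
            show "J \<subseteq> S I"
            proof
              fix z assume z: "z \<in> J"
              then have "z \<in> S (insert i0 I)" using a by blast
              then obtain p where p: "p \<in> X \<times> insert i0 I" "z = enc p" unfolding S_def by blast
              have "snd p \<noteq> i0"
              proof
                assume "snd p = i0"
                then have "i0 = idx z" using p sd by simp
                then show False using i0(2) z by blast
              qed
              then show "z \<in> S I" using p unfolding S_def by auto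
            qed
          next
            assume "J \<subseteq> S I" then show "J \<subseteq> S (insert i0 I)" unfolding S_def by auto
          qed
          then show "(if J \<subseteq> S (insert i0 I) then g J else 0) = (if J \<subseteq> S I then g J else 0)" by simp
        qed
      qed
    qed
    finally show ?thesis by simp
  qed
  have "diamond Fm X Y {..<Suc n} \<alpha> v = alt K (\<lambda>I. Fm X Y (msum I \<alpha>) v)"
    unfolding diamond_alt K_def by (rule refl)
  also have "\<dots> = alt K (\<lambda>I. Fm Z Y \<gamma> (hh I))"
    by (rule alt_cong) (unfold hh_def, rule comp)
  also have "\<dots> = Fm Z Y \<gamma> (alt K hh)" by (rule Fm_alt[OF fZ fY \<gamma>hom hhin, symmetric])
  also have "\<dots> = 0" using alt0 Fm_zero[OF fZ fY \<gamma>hom] by simp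
  finally show "diamond Fm X Y {..<Suc n} \<alpha> v = 0" .
qed

end


context mf begin

lemma D_idem:
  assumes fX: "finite X" and w: "w \<in> Fo X"
  shows "diamond Fm X X X pi (diamond Fm X X X pi w) = diamond Fm X X X pi w"
proof -
  define D where "D = diamond Fm X X X pi w"
  have PX: "msum I pi \<in> hom X X" if "I \<subseteq> X" for I using that by (rule PT_hom)
  have key: "Fm X X (msum I pi) D = (if I = X then D else 0)" if I: "I \<subseteq> X" for I
  proof -
    have "Fm X X (msum I pi) D = alt X (\<lambda>J. Fm X X (msum I pi) (Fm X X (msum J pi) w))"
      unfolding D_def diamond_alt by (rule Fm_alt[OF fX fX PX[OF I]]) (rule Fm_in[OF fX fX PX w])
    also have "\<dots> = alt X (\<lambda>J. Fm X X (msum (I \<inter> J) pi) w)"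
    proof (rule alt_cong)
      fix J assume J: "J \<subseteq> X"
      have "Fm X X (msum (I \<inter> J) pi) w = Fm X X (mcomp X (msum I pi) (msum J pi)) w"
        by (subst mcomp_PT[OF fX I J]) (rule refl)
      also have "\<dots> = Fm X X (msum I pi) (Fm X X (msum J pi) w)"
        by (rule Fm_comp[OF fX fX fX PX[OF J] PX[OF I] w])
      finally show "Fm X X (msum I pi) (Fm X X (msum J pi) w) = Fm X X (msum (I \<inter> J) pi) w" by simp
    qed
    also have "\<dots> = (if I = X then D else 0)"
    proof (cases "I = X")
      case True
      have "alt X (\<lambda>J. Fm X X (msum (I \<inter> J) pi) w) = alt X (\<lambda>J. Fm X X (msum J pi) w)"
        by (rule alt_cong) (simp add: True Int_absorb1)
      then show ?thesis using True unfolding D_def diamond_alt by simp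
    next
      case False
      then obtain t where t: "t \<in> X" "t \<notin> I" using I by auto
      have "alt X (\<lambda>J. Fm X X (msum (I \<inter> J) pi) w) = 0"
        by (rule alt_miss[OF fX t(1)]) (simp add: t(2))
      then show ?thesis using False by simp
    qed
    finally show ?thesis .
  qed
  have "diamond Fm X X X pi D = alt X (\<lambda>I. Fm X X (msum I pi) D)" by (rule diamond_alt)
  also have "\<dots> = alt X (\<lambda>I. if I = X then D else 0)" by (rule alt_cong) (rule key)
  also have "\<dots> = D" by (rule alt_top[OF fX])
  finally have "diamond Fm X X X pi D = D" .
  then show ?thesis unfolding D_def .
qed

lemma zero_Fo: "finite X \<Longrightarrow> 0 \<in> Fo X"
  using grpF unfolding grp_def by blast

lemma pi_hom_all: "\<forall>i\<in>X. pi i \<in> hom X X"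
  by (auto intro: sigma_hom)

lemma poly_cr:
  assumes poly: "poly_deg_le Fo Fm n" and fX: "finite X" and c: "card X > n"
  shows "cr Fo Fm X = {0}"
proof -
  have z: "diamond Fm X X X pi w = 0" if "w \<in> Fo X" for w
    by (rule G[OF poly fX fX fX c pi_hom_all that])
  have sub: "cr Fo Fm X \<subseteq> {0}" unfolding cr_def using z by blast
  have m: "diamond Fm X X X pi 0 \<in> cr Fo Fm X" unfolding cr_def using zero_Fo[OF fX] by (rule imageI)
  then have "diamond Fm X X X pi 0 = 0" using sub by blast
  then have "0 \<in> cr Fo Fm X" using m by simp
  then show ?thesis using sub by auto
qed

lemma cr_sub: "finite X \<Longrightarrow> v \<in> cr Fo Fm X \<Longrightarrow> v \<in> Fo X"
  unfolding cr_def
  by (auto intro!: diamond_in msum_hom sigma_hom)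

lemma poly_maze:
  assumes poly: "poly_deg_le Fo Fm n" and fX: "finite X" and fY: "finite Y"
    and mz: "is_maze X Y P" and sz: "size P > n" and v: "v \<in> cr Fo Fm X"
  shows "Phi_maze Fm X Y P v = 0"
proof -
  have vF: "v \<in> Fo X" by (rule cr_sub[OF fX v])
  have h: "\<forall>q\<in>occs P. passage_map (fst q) \<in> hom X Y"
  proof
    fix q assume "q \<in> occs P"
    then have q: "fst q \<in># P" unfolding occs_def by auto
    obtain x y b where e: "fst q = (x, y, b)" by (cases "fst q") auto
    have "x \<in> X \<and> y \<in> Y" using mz q e unfolding is_maze_def by fastforce
    then show "passage_map (fst q) \<in> hom X Y" unfolding e passage_map_def by (auto intro: sigma_hom)
  qed
  have oc: "finite (occs P)" "card (occs P) > n" using occs_fin_card[of P] sz by auto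
  show ?thesis unfolding Phi_maze_def by (rule G[OF poly fX fY oc h vF])
qed

lemma maze_cr:
  assumes C2: "\<forall>X Y P. finite X \<and> finite Y \<and> is_maze X Y P \<and> size P > n \<longrightarrow>
               (\<forall>v\<in>cr Fo Fm X. Phi_maze Fm X Y P v = 0)"
    and fX: "finite X" and c: "card X > n"
  shows "cr Fo Fm X = {0}"
proof -
  define pp :: "nat \<Rightarrow> 'b passage" where "pp x = (x, x, 1)" for x
  define P where "P = mset_set (pp ` X)"
  have injpp: "inj pp" unfolding pp_def inj_def by auto
  have fpp: "finite (pp ` X)" using fX by simp
  have sP: "set_mset P = pp ` X" unfolding P_def using fpp by simp
  have cP: "count P p = (if p \<in> pp ` X then 1 else 0)" for p unfolding P_def using fpp by (simp add: count_mset_set')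
  have maze: "is_maze X X P" unfolding is_maze_def sP pp_def by force
  have size: "size P = card X" unfolding P_def using fX injpp
    by (simp add: card_image inj_on_subset)
  have occ: "occs P = (\<lambda>x. (pp x, 0::nat)) ` X" unfolding occs_def using cP sP by auto
  have bij: "bij_betw (\<lambda>x. (pp x, 0::nat)) X (occs P)"
    unfolding occ bij_betw_def inj_on_def using injpp by (auto simp: inj_def)
  have Phi: "Phi_maze Fm X X P u = diamond Fm X X X pi u" for u
  proof -
    have "Phi_maze Fm X X P u = diamond Fm X X X ((\<lambda>q. passage_map (fst q)) \<circ> (\<lambda>x. (pp x, 0::nat))) u"
      unfolding Phi_maze_def by (rule diamond_reindex[OF bij fX])
    also have "(\<lambda>q. passage_map (fst q)) \<circ> (\<lambda>x. (pp x, 0::nat)) = pi"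
      by (rule ext) (simp add: pp_def passage_map_def)
    finally show ?thesis .
  qed
  have pre: "finite X \<and> finite X \<and> is_maze X X P \<and> size P > n" using fX maze size c by simp
  have all0: "\<forall>v\<in>cr Fo Fm X. Phi_maze Fm X X P v = 0" using C2 pre by blast
  have zero: "u = 0" if u: "u \<in> cr Fo Fm X" for u
  proof -
    obtain w where w: "w \<in> Fo X" "u = diamond Fm X X X pi w" using u unfolding cr_def by blast
    have "Phi_maze Fm X X P u = 0" using all0 u by blast
    then have "diamond Fm X X X pi u = 0" using Phi by simp
    moreover have "diamond Fm X X X pi u = u" using D_idem[OF fX w(1)] w(2) by simp
    ultimately show ?thesis by simp
  qed
  have m: "diamond Fm X X X pi 0 \<in> cr Fo Fm X" unfolding cr_def using zero_Fo[OF fX] by (rule imageI)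
  then have "diamond Fm X X X pi 0 = 0" by (rule zero)
  then have z0: "0 \<in> cr Fo Fm X" using m by simp
  show ?thesis using zero z0 by auto
qed

end

theorem mainTheorem2:
  fixes Fo :: "nat set \<Rightarrow> 'v::ab_group_add set"
    and act :: "nat set \<Rightarrow> 'v \<Rightarrow> 'b::ring_1 \<Rightarrow> 'v"
    and Fm :: "nat set \<Rightarrow> nat set \<Rightarrow> 'b mat \<Rightarrow> 'v \<Rightarrow> 'v"
    and n :: nat
  assumes "module_functor Fo act Fm"
  shows "(poly_deg_le Fo Fm n \<longleftrightarrow>
            (\<forall>X. finite X \<and> card X > n \<longrightarrow> cr Fo Fm X = {0}))
       \<and> (poly_deg_le Fo Fm n \<longleftrightarrow>
            (\<forall>X Y P. finite X \<and> finite Y \<and> is_maze X Y P \<and> size P > n \<longrightarrow>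
               (\<forall>v\<in>cr Fo Fm X. Phi_maze Fm X Y P v = 0)))"
proof -
  interpret mf Fo act Fm by (rule mf.intro[OF assms])
  have A1: "poly_deg_le Fo Fm n \<Longrightarrow> (\<forall>X. finite X \<and> card X > n \<longrightarrow> cr Fo Fm X = {0})"
    using poly_cr by blast
  have A2: "(\<forall>X. finite X \<and> card X > n \<longrightarrow> cr Fo Fm X = {0}) \<Longrightarrow> poly_deg_le Fo Fm n"
    by (rule cr_to_poly)
  have B1: "poly_deg_le Fo Fm n \<Longrightarrow> (\<forall>X Y P. finite X \<and> finite Y \<and> is_maze X Y P \<and> size P > n \<longrightarrow>
               (\<forall>v\<in>cr Fo Fm X. Phi_maze Fm X Y P v = 0))"
    using poly_maze by blast
  have B2: "(\<forall>X Y P. finite X \<and> finite Y \<and> is_maze X Y P \<and> size P > n \<longrightarrow>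
               (\<forall>v\<in>cr Fo Fm X. Phi_maze Fm X Y P v = 0)) \<Longrightarrow> poly_deg_le Fo Fm n"
  proof -
    assume C2: "\<forall>X Y P. finite X \<and> finite Y \<and> is_maze X Y P \<and> size P > n \<longrightarrow>
               (\<forall>v\<in>cr Fo Fm X. Phi_maze Fm X Y P v = 0)"
    have "\<forall>X. finite X \<and> card X > n \<longrightarrow> cr Fo Fm X = {0}"
    proof (intro allI impI)
      fix X :: "nat set" assume "finite X \<and> card X > n"
      then show "cr Fo Fm X = {0}" using maze_cr[OF C2] by blast
    qed
    then show ?thesis by (rule A2)
  qed
  show ?thesis using A1 A2 B1 B2 by blast
qed


end
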